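(* Let $q$ be a prime power, $\mathrm{F}$ the $q$-power Frobenius on $\mathcal{P}_5$ over $\overline{\mathbb{F}}_q$, and $\sigma\in S_5$ a 5-cycle acting on $\mathcal{P}_5$ by permuting the five points. Then the number of points of $\mathcal{P}_5(\overline{\mathbb{F}}_q)$ fixed by $\mathrm{F}\sigma$ is $$\left|\mathcal{P}_5^{\mathrm{F}\sigma}\right|=q^2+1.$$
   Context: $\mathcal{P}_5$ is the moduli space of ordered 5-tuples of points in $\mathbb{P}^2$ in general position (pairwise distinct, no three collinear) modulo $\mathrm{PGL}_3$, defined over $\mathbb{Z}$ and considered over $\overline{\mathbb{F}}_q$; $S_5$ acts by permuting the points, and $\mathrm{F}\sigma$ denotes the composition of $\sigma$ with the $q$-power Frobenius. *)

theory Defs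
  imports "HOL-Analysis.Analysis" "HOL-Computational_Algebra.Polynomial"
    "HOL-Library.Numeral_Type" "HOL-Combinatorics.Cycles"
begin

text \<open>A point of P^2(k) is represented by a nonzero vector in k^3; an ordered
  5-tuple of points is an element of k^3^5 (row i = homogeneous coordinates of point i).\<close>

definition rows3 :: "'k^3^5 \<Rightarrow> 5 \<Rightarrow> 5 \<Rightarrow> 5 \<Rightarrow> 'k^3^3" where
  "rows3 v i j l = (\<chi> r. if r = 1 then v$i else if r = 2 then v$j else v$l)"

text \<open>General position: points nonzero, pairwise distinct in P^2 and no three collinear.
  (Pairwise distinctness and nonzeroness follow from the determinant condition, but
  we state them explicitly.)\<close>
definition gen_pos :: "('k::field)^3^5 \<Rightarrow> bool" where
  "gen_pos v \<longleftrightarrow> (\<forall>i. v$i \<noteq> 0)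
     \<and> (\<forall>i j. i \<noteq> j \<longrightarrow> (\<forall>c. v$i \<noteq> c *s v$j))
     \<and> (\<forall>i j l. i \<noteq> j \<and> j \<noteq> l \<and> i \<noteq> l \<longrightarrow> det (rows3 v i j l) \<noteq> 0)"

definition configs :: "(('k::field)^3^5) set" where
  "configs = {v. gen_pos v}"

definition pgl_rel :: "((('k::field)^3^5) \<times> ('k^3^5)) set" where
  "pgl_rel = {(v, w). v \<in> configs \<and> w \<in> configs \<and>
      (\<exists>(A::'k^3^3) (c::5 \<Rightarrow> 'k). invertible A \<and> (\<forall>i. c i \<noteq> 0) \<and>
         (\<forall>i. w$i = c i *s (A *v (v$i))))}"

definition P5 :: "(('k::field)^3^5) set set" where
  "P5 = configs // pgl_rel"

definition frob_perm :: "nat \<Rightarrow> (5 \<Rightarrow> 5) \<Rightarrow> ('k::field)^3^5 \<Rightarrow> 'k^3^5" where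
  "frob_perm q \<sigma> v = (\<chi> i. \<chi> r. (v $ (\<sigma> i) $ r) ^ q)"

definition P5_fixed :: "nat \<Rightarrow> (5 \<Rightarrow> 5) \<Rightarrow> (('k::field)^3^5) set set" where
  "P5_fixed q \<sigma> = {X \<in> P5. \<forall>v\<in>X. frob_perm q \<sigma> v \<in> X}"

end

theory Submission
  imports Defs "HOL-Computational_Algebra.Primes"
begin


lemma simple_roots_card:
  fixes f :: "'k::field poly"
  assumes ac: "\<forall>g :: 'k poly. degree g > 0 \<longrightarrow> (\<exists>x. poly g x = 0)"
  shows "f \<noteq> 0 \<Longrightarrow> (\<forall>a. poly f a = 0 \<longrightarrow> poly (pderiv f) a \<noteq> 0)
     \<Longrightarrow> card {a. poly f a = 0} = degree f"
proof (induction "degree f" arbitrary: f)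
  case 0
  then obtain c where "f = [:c:]" by (metis degree_eq_zeroE)
  with 0 show ?case by auto
next
  case (Suc d)
  then obtain a where a: "poly f a = 0" using ac by (metis zero_less_Suc)
  then obtain g where fg: "f = [:-a,1:] * g" by (metis dvdE poly_eq_0_iff_dvd)
  have g0: "g \<noteq> 0" using Suc.prems fg by auto
  have "degree ([:-a,1:] * g) = Suc (degree g)"
    using degree_mult_eq[of "[:-a,1:]" g] g0 by simp
  then have dg: "degree g = d" using Suc.hyps(2) fg by simp
  have p1: "pderiv [:-a,1::'k:] = 1" by (simp add: pderiv_pCons)
  have pd: "pderiv f = g + [:-a,1:] * pderiv g"
    unfolding fg pderiv_mult p1 by (simp add: algebra_simps)
  have ga: "poly g a \<noteq> 0" using Suc.prems(2) a pd by auto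
  have gs: "\<forall>b. poly g b = 0 \<longrightarrow> poly (pderiv g) b \<noteq> 0"
  proof (intro allI impI)
    fix b assume gb: "poly g b = 0"
    then have "b \<noteq> a" using ga by auto
    have "poly f b = 0" using fg gb by simp
    then have "poly (pderiv f) b \<noteq> 0" using Suc.prems(2) by blast
    then show "poly (pderiv g) b \<noteq> 0" using pd gb by auto
  qed
  have IH: "card {b. poly g b = 0} = d" using Suc.hyps(1)[OF dg[symmetric] g0 gs] dg by simp
  have "{b. poly f b = 0} = insert a {b. poly g b = 0}" using fg by auto
  moreover have "finite {b. poly g b = 0}" using g0 by (rule poly_roots_finite)
  ultimately show ?case using IH ga Suc.hyps(2) by simp
qed

definition frobq :: "nat \<Rightarrow> 'k::field itself \<Rightarrow> bool" where
  "frobq q t \<longleftrightarrow> prime CHAR('k) \<and> (\<exists>n. n \<ge> 1 \<and> q = CHAR('k)^n)"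

lemma frobq_char: "frobq q TYPE('k::field) \<Longrightarrow> of_nat q = (0::'k)"
  unfolding frobq_def of_nat_eq_0_iff_char_dvd by auto

lemma frobq_ge2: "frobq q TYPE('k::field) \<Longrightarrow> q \<ge> 2"
proof -
  assume "frobq q TYPE('k)"
  then obtain n where "prime CHAR('k)" "n \<ge> 1" "q = CHAR('k)^n" unfolding frobq_def by auto
  moreover have "CHAR('k) \<ge> 2" using calculation(1) prime_ge_2_nat by blast
  moreover have "CHAR('k) \<le> CHAR('k)^n"
    by (rule self_le_power) (use calculation in auto)
  ultimately show ?thesis by linarith
qed

lemma frob_add: "frobq q TYPE('k::field) \<Longrightarrow> (x + y :: 'k) ^ q = x ^ q + y ^ q"
  unfolding frobq_def using freshmans_dream' by blast

lemma frob_neg: "frobq q TYPE('k::field) \<Longrightarrow> (- x :: 'k) ^ q = - (x ^ q)"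
proof -
  assume h: "frobq q TYPE('k)"
  have "(x + - x) ^ q = x ^ q + (- x) ^ q" by (rule frob_add[OF h])
  moreover have "(0::'k) ^ q = 0" using frobq_ge2[OF h] by simp
  ultimately show ?thesis by (simp add: eq_neg_iff_add_eq_0 add.commute)
qed

lemma frob_diff: "frobq q TYPE('k::field) \<Longrightarrow> (x - y :: 'k) ^ q = x ^ q - y ^ q"
  using frob_add[of q "x" "- y"] frob_neg[of q y] by simp

lemma frob_sum: "frobq q TYPE('k::field) \<Longrightarrow> (sum f A :: 'k) ^ q = sum (\<lambda>i. f i ^ q) A"
  unfolding frobq_def using freshmans_dream_sum' by blast

lemma frob_zero_iff: "frobq q TYPE('k::field) \<Longrightarrow> ((x::'k) ^ q = 0) = (x = 0)"
proof -
  assume h: "frobq q TYPE('k)"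
  have "q \<ge> 2" using frobq_ge2[OF h] .
  then show ?thesis by (auto simp: power_0_left)
qed

lemma frob_inj: "frobq q TYPE('k::field) \<Longrightarrow> (x::'k) ^ q = y ^ q \<Longrightarrow> x = y"
  using frob_diff[of q x y] frob_zero_iff[of q "x - y"] by simp

definition fpoly :: "nat \<Rightarrow> 'k::field poly" where
  "fpoly q = monom 1 (q^2+1) + monom 1 q - 1"

lemma poly_fpoly: "poly (fpoly q) y = y^(q^2+1) + y^q - 1"
  by (simp add: fpoly_def poly_monom)

lemma degree_fpoly: "q \<ge> 2 \<Longrightarrow> degree (fpoly q :: 'k::field poly) = q^2+1"
proof -
  assume q: "q \<ge> 2"
  have "q \<le> q * q" by (rule le_square)
  then have qq: "q < q^2 + 1" unfolding power2_eq_square by linarith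
  have "degree (monom (1::'k) q - 1) \<le> q"
    by (rule degree_diff_le) (simp_all add: degree_monom_le)
  then have "degree (monom (1::'k) q - 1) < q^2+1" using qq by linarith
  moreover have dm: "degree (monom (1::'k) (q^2+1)) = q^2+1"
    by (rule degree_monom_eq) simp
  ultimately have "degree (monom (1::'k) (q^2+1) + (monom 1 q - 1)) = degree (monom (1::'k) (q^2+1))"
    by (intro degree_add_eq_left) (simp only: dm)
  then have "degree (monom (1::'k) (q^2+1) + (monom 1 q - 1)) = q^2+1"
    using dm by simp
  then show ?thesis by (simp add: fpoly_def add_diff_eq)
qed

lemma card_fpoly_roots:
  assumes h: "frobq q TYPE('k::field)"
    and ac: "\<forall>g :: 'k poly. degree g > 0 \<longrightarrow> (\<exists>x. poly g x = 0)"
  shows "card {y::'k. y^(q^2+1) + y^q - 1 = 0} = q^2+1"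
proof -
  have q2: "q \<ge> 2" using frobq_ge2[OF h] .
  have dg: "degree (fpoly q :: 'k poly) = q^2+1" using degree_fpoly[OF q2] .
  then have nz: "fpoly q \<noteq> (0 :: 'k poly)" by auto
  have c1: "of_nat (q^2+1) = (1::'k)" using frobq_char[OF h] by simp
  have c0: "of_nat q = (0::'k)" using frobq_char[OF h] .
  have "pderiv (fpoly q :: 'k poly) = monom (of_nat (q^2+1) * 1) (q^2+1-1) + monom (of_nat q * 1) (q - 1)"
    by (simp only: fpoly_def pderiv_add pderiv_diff pderiv_monom pderiv_1 diff_zero)
  also have "\<dots> = monom 1 (q^2)"
    by (simp only: c0 c1 mult_1_right mult_zero_left monom_eq_0 add_0_right add_diff_cancel_right')
  finally have pd: "poly (pderiv (fpoly q)) y = y ^ (q^2)" for y :: 'k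
    by (simp add: poly_monom)
  have simp: "\<forall>a. poly (fpoly q) a = 0 \<longrightarrow> poly (pderiv (fpoly q)) a \<noteq> (0::'k)"
  proof (intro allI impI)
    fix a :: 'k assume "poly (fpoly q) a = 0"
    moreover have "(0::'k) ^ (q^2+1) + 0 ^ q - 1 \<noteq> 0" using q2 by (simp add: power_0_left)
    ultimately have "a \<noteq> 0" by (auto simp: poly_fpoly)
    then show "poly (pderiv (fpoly q)) a \<noteq> 0" using pd by simp
  qed
  have "card {a. poly (fpoly q) a = (0::'k)} = q^2+1"
    using simple_roots_card[OF ac nz simp] dg by simp
  then show ?thesis by (simp add: poly_fpoly)
qed



definition det3 :: "'k::comm_ring_1^3 \<Rightarrow> 'k^3 \<Rightarrow> 'k^3 \<Rightarrow> 'k" where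
  "det3 x y z = x$1 * y$2 * z$3 + x$2 * y$3 * z$1 + x$3 * y$1 * z$2 - x$1 * y$3 * z$2 - x$2 * y$1 * z$3 - x$3 * y$2 * z$1"

lemma three_neq: "(3::3) \<noteq> 1" "(3::3) \<noteq> 2" "(1::3) \<noteq> 2" by simp_all

lemma rows3_comp: "rows3 v i j l $ 1 = v $ i" "rows3 v i j l $ 2 = v $ j" "rows3 v i j l $ 3 = v $ l"
  by (simp_all add: rows3_def)

lemma det_rows3: "det (rows3 (v::'k::comm_ring_1^3^5) i j l) = det3 (v$i) (v$j) (v$l)"
  by (simp add: det_3 rows3_comp det3_def)

lemma mv3: "((A::'k::comm_ring_1^3^3) *v x) $ i = A$i$1 * x$1 + A$i$2 * x$2 + A$i$3 * x$3"
  by (simp add: matrix_vector_mult_def sum_3)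

lemma vec3_eq: "((u::'k^3) = v) \<longleftrightarrow> u$1 = v$1 \<and> u$2 = v$2 \<and> u$3 = v$3"
  by (simp add: vec_eq_iff forall_3)

lemma det3_zero1: "det3 0 v w = 0" by (simp add: det3_def)
lemma det3_prop: "det3 (c *s v) v w = 0" by (simp add: det3_def algebra_simps)

lemma ex_third: "\<exists>l::5. l \<noteq> i \<and> l \<noteq> j"
proof (rule ccontr)
  assume "\<not> ?thesis"
  then have "UNIV \<subseteq> {i, j}" by auto
  then have "card (UNIV::5 set) \<le> card {i,j}" by (intro card_mono) auto
  also have "\<dots> \<le> 2" by (simp add: card_insert_le_m1)
  finally show False by simp
qed

lemma gen_pos_iff:
  "gen_pos (v::'k::field^3^5) \<longleftrightarrow>
     (\<forall>i j l. i \<noteq> j \<and> j \<noteq> l \<and> i \<noteq> l \<longrightarrow> det3 (v$i) (v$j) (v$l) \<noteq> 0)"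
proof
  assume "gen_pos v" then show "\<forall>i j l. i \<noteq> j \<and> j \<noteq> l \<and> i \<noteq> l \<longrightarrow> det3 (v$i) (v$j) (v$l) \<noteq> 0"
    unfolding gen_pos_def det_rows3 by blast
next
  assume H: "\<forall>i j l. i \<noteq> j \<and> j \<noteq> l \<and> i \<noteq> l \<longrightarrow> det3 (v$i) (v$j) (v$l) \<noteq> 0"
  have A: "v$i \<noteq> 0" for i
  proof
    assume z: "v$i = 0"
    obtain j where j: "j \<noteq> i" using ex_third[of i i] by auto
    obtain l where l: "l \<noteq> i" "l \<noteq> j" using ex_third[of i j] by auto
    have "det3 (v$i) (v$j) (v$l) \<noteq> 0" using H j l by auto
    then show False using z by (simp add: det3_zero1)
  qed
  have B: "v$i \<noteq> c *s v$j" if "i \<noteq> j" for i j c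
  proof
    assume z: "v$i = c *s v$j"
    obtain l where l: "l \<noteq> i" "l \<noteq> j" using ex_third[of i j] by auto
    have "det3 (v$i) (v$j) (v$l) \<noteq> 0" using H that l by auto
    then show False using z by (simp add: det3_prop)
  qed
  show "gen_pos v" unfolding gen_pos_def det_rows3 using A B H by blast
qed

lemma det3_transform:
  "det3 (c1 *s ((A::'k::comm_ring_1^3^3) *v u)) (c2 *s (A *v v)) (c3 *s (A *v w)) = c1*c2*c3*det A * det3 u v w"
  by (simp add: det3_def det_3 mv3 algebra_simps)

lemma gen_pos_transform:
  assumes "gen_pos (v::'k::field^3^5)" "invertible A" "\<forall>i. c i \<noteq> 0"
    "\<forall>i. w$i = c i *s (A *v v$i)"
  shows "gen_pos w"
proof -
  have dA: "det A \<noteq> 0" using assms(2) invertible_det_nz by blast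
  show ?thesis unfolding gen_pos_iff
  proof (intro allI impI)
    fix i j l :: 5 assume d: "i \<noteq> j \<and> j \<noteq> l \<and> i \<noteq> l"
    have "det3 (v$i) (v$j) (v$l) \<noteq> 0" using assms(1) d unfolding gen_pos_iff by blast
    then show "det3 (w$i) (w$j) (w$l) \<noteq> 0"
      using assms(3,4) dA by (simp add: det3_transform)
  qed
qed

definition rel' :: "('k::field)^3^5 \<Rightarrow> 'k^3^5 \<Rightarrow> bool" where
  "rel' v w \<longleftrightarrow> (\<exists>(A::'k^3^3) (c::5 \<Rightarrow> 'k). invertible A \<and> (\<forall>i. c i \<noteq> 0) \<and>
         (\<forall>i. w$i = c i *s (A *v (v$i))))"

lemma pgl_rel_iff: "(v, w) \<in> pgl_rel \<longleftrightarrow> gen_pos v \<and> rel' v w"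
  unfolding pgl_rel_def rel'_def configs_def using gen_pos_transform by blast

lemma mv_smult: "(A::'k::comm_ring_1^3^3) *v (c *s x) = c *s (A *v x)"
  by (simp add: vec3_eq mv3 algebra_simps)

lemma equiv_pgl: "equiv configs (pgl_rel :: ((('k::field)^3^5) \<times> _) set)"
proof (rule equivI)
  show "pgl_rel \<subseteq> configs \<times> (configs :: ('k^3^5) set)" unfolding pgl_rel_def by auto
next
  show "refl_on configs (pgl_rel :: ((('k::field)^3^5) \<times> _) set)"
  proof (rule refl_onI)
    fix x :: "'k^3^5" assume "x \<in> configs"
    moreover have "rel' x x" unfolding rel'_def
      by (rule exI[of _ "mat 1"], rule exI[of _ "\<lambda>_. 1"]) (simp add: invertible_det_nz det_I)
    ultimately show "(x, x) \<in> pgl_rel" unfolding pgl_rel_iff configs_def by simp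
  qed
next
  show "sym (pgl_rel :: ((('k::field)^3^5) \<times> _) set)"
  proof (rule symI)
    fix v w :: "'k^3^5" assume "(v, w) \<in> pgl_rel"
    then obtain A c where vw: "v \<in> configs" "w \<in> configs" "invertible A" "\<forall>i. c i \<noteq> 0"
        "\<forall>i. w$i = c i *s (A *v (v$i))" unfolding pgl_rel_def by auto
    obtain B where B: "B ** A = mat 1" using vw(3) invertible_left_inverse by blast
    have "det B * det A = 1" using B det_mul[of B A] det_I by metis
    then have iB: "invertible B" using invertible_det_nz by force
    have "v$i = inverse (c i) *s (B *v (w$i))" for i
      using vw(4,5) B by (simp add: mv_smult matrix_vector_mul_assoc vector_smult_assoc)
    then show "(w, v) \<in> pgl_rel" unfolding pgl_rel_def using vw iB
      by (intro CollectI case_prodI conjI) (auto intro!: exI[of _ B] exI[of _ "\<lambda>i. inverse (c i)"])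
  qed
next
  show "trans (pgl_rel :: ((('k::field)^3^5) \<times> _) set)"
  proof (rule transI)
    fix u v w :: "'k^3^5" assume "(u, v) \<in> pgl_rel" "(v, w) \<in> pgl_rel"
    then obtain A c B d where h: "u \<in> configs" "w \<in> configs" "invertible A" "\<forall>i. c i \<noteq> 0"
        "\<forall>i. v$i = c i *s (A *v (u$i))" "invertible B" "\<forall>i. d i \<noteq> 0"
        "\<forall>i. w$i = d i *s (B *v (v$i))" unfolding pgl_rel_def by auto
    have "w$i = (d i * c i) *s ((B ** A) *v (u$i))" for i
      using h(5,8) by (simp add: mv_smult matrix_vector_mul_assoc vector_smult_assoc)
    moreover have "invertible (B ** A)" using h(3,6) invertible_mult by blast
    ultimately show "(u, w) \<in> pgl_rel" unfolding pgl_rel_def using h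
      by (intro CollectI case_prodI conjI) (auto intro!: exI[of _ "B ** A"] exI[of _ "\<lambda>i. d i * c i"])
  qed
qed

definition fv :: "nat \<Rightarrow> 'k::field^3 \<Rightarrow> 'k^3" where "fv q x = (\<chi> r. (x$r)^q)"
definition fm :: "nat \<Rightarrow> 'k::field^3^3 \<Rightarrow> 'k^3^3" where "fm q A = (\<chi> i j. (A$i$j)^q)"

lemma fv_comp[simp]: "fv q x $ r = (x$r)^q" by (simp add: fv_def)
lemma fm_comp[simp]: "fm q A $ i $ j = (A$i$j)^q" by (simp add: fm_def)

lemma frob_perm_comp: "frob_perm q \<sigma> v $ i = fv q (v $ \<sigma> i)"
  by (simp add: frob_perm_def fv_def)

lemma fv_transform:
  assumes h: "frobq q TYPE('k::field)"
  shows "fv q (c *s ((A::'k^3^3) *v x)) = c^q *s (fm q A *v fv q x)"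
  by (simp add: vec3_eq mv3 frob_add[OF h] power_mult_distrib)

lemma det_fm:
  assumes h: "frobq q TYPE('k::field)"
  shows "det (fm q (A::'k^3^3)) = (det A)^q"
  by (simp add: det_3 frob_add[OF h] frob_diff[OF h] power_mult_distrib)

lemma det3_fv:
  assumes h: "frobq q TYPE('k::field)"
  shows "det3 (fv q (x::'k^3)) (fv q y) (fv q z) = (det3 x y z)^q"
  by (simp only: det3_def fv_comp frob_add[OF h] frob_diff[OF h] power_mult_distrib)

lemma gen_pos_frob:
  assumes h: "frobq q TYPE('k::field)" and "inj \<sigma>" and "gen_pos (v::'k^3^5)"
  shows "gen_pos (frob_perm q \<sigma> v)"
  unfolding gen_pos_iff frob_perm_comp det3_fv[OF h] frob_zero_iff[OF h]
proof (intro allI impI)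
  fix i j l :: 5 assume "i \<noteq> j \<and> j \<noteq> l \<and> i \<noteq> l"
  then have "\<sigma> i \<noteq> \<sigma> j \<and> \<sigma> j \<noteq> \<sigma> l \<and> \<sigma> i \<noteq> \<sigma> l" using assms(2) by (auto dest: injD)
  then show "det3 (v $ \<sigma> i) (v $ \<sigma> j) (v $ \<sigma> l) \<noteq> 0" using assms(3) unfolding gen_pos_iff by blast
qed

lemma transport:
  assumes h: "frobq q TYPE('k::field)" and "inj \<sigma>" and "(v, w) \<in> (pgl_rel :: (('k^3^5) \<times> _) set)"
  shows "(frob_perm q \<sigma> v, frob_perm q \<sigma> w) \<in> pgl_rel"
proof -
  obtain A c where vw: "gen_pos v" "invertible A" "\<forall>i. c i \<noteq> 0"
        "\<forall>i. w$i = c i *s (A *v (v$i))" using assms(3) unfolding pgl_rel_iff rel'_def by auto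
  have "det (fm q A) \<noteq> 0" using vw(2) det_fm[OF h] frob_zero_iff[OF h] invertible_det_nz by metis
  then have iA: "invertible (fm q A)" using invertible_det_nz by blast
  have "frob_perm q \<sigma> w $ i = (c (\<sigma> i))^q *s (fm q A *v (frob_perm q \<sigma> v $ i))" for i
    using vw(4) by (simp add: frob_perm_comp fv_transform[OF h])
  moreover have "\<forall>i. (c (\<sigma> i))^q \<noteq> 0" using vw(3) frob_zero_iff[OF h] by blast
  ultimately have "rel' (frob_perm q \<sigma> v) (frob_perm q \<sigma> w)" unfolding rel'_def using iA
    by (intro exI[of _ "fm q A"] exI[of _ "\<lambda>i. (c (\<sigma> i))^q"]) auto
  then show ?thesis unfolding pgl_rel_iff using gen_pos_frob[OF h assms(2) vw(1)] by blast
qed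



locale cyc =
  fixes a b c d e :: 5 and \<sigma> :: "5 \<Rightarrow> 5"
  assumes dist: "a \<noteq> b" "a \<noteq> c" "a \<noteq> d" "a \<noteq> e" "b \<noteq> c" "b \<noteq> d" "b \<noteq> e"
     "c \<noteq> d" "c \<noteq> e" "d \<noteq> e"
  and sig: "\<sigma> a = b" "\<sigma> b = c" "\<sigma> c = d" "\<sigma> d = e" "\<sigma> e = a"
  and exh: "\<And>i. i = a \<or> i = b \<or> i = c \<or> i = d \<or> i = e"
begin

lemma dist': "b \<noteq> a" "c \<noteq> a" "d \<noteq> a" "e \<noteq> a" "c \<noteq> b" "d \<noteq> b" "e \<noteq> b"
     "d \<noteq> c" "e \<noteq> c" "e \<noteq> d" using dist by auto

lemmas D = dist dist'

definition nf :: "'k::field \<Rightarrow> 'k \<Rightarrow> 'k^3^5" where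
  "nf s t = (\<chi> i. if i = a then vector [1,0,0] else if i = b then vector [0,1,0]
     else if i = c then vector [0,0,1] else if i = d then vector [1,1,1] else vector [1,s,t])"

lemma nf_comp: "nf s t $ a = vector [1,0,0]" "nf s t $ b = vector [0,1,0]"
  "nf s t $ c = vector [0,0,1]" "nf s t $ d = vector [1,1,1]" "nf s t $ e = vector [1,s,t]"
  by (simp_all add: nf_def D)

lemma inj_sig: "inj \<sigma>"
proof (rule injI)
  fix i j assume "\<sigma> i = \<sigma> j"
  then show "i = j" using exh[of i] exh[of j] sig D by auto
qed

lemma nf_gen_pos:
  assumes "s \<noteq> 0" "t \<noteq> 0" "s \<noteq> 1" "t \<noteq> 1" "s \<noteq> (t::'k::field)"
  shows "gen_pos (nf s t)"
  unfolding gen_pos_iff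
proof (intro allI impI)
  fix i j l :: 5 assume dd: "i \<noteq> j \<and> j \<noteq> l \<and> i \<noteq> l"
  have s: "s - t \<noteq> 0" "t - s \<noteq> 0" "s - 1 \<noteq> 0" "t - 1 \<noteq> 0" "1 - s \<noteq> 0" "1 - t \<noteq> 0" "t \<noteq> s"
    using assms by auto
  show "det3 (nf s t $ i) (nf s t $ j) (nf s t $ l) \<noteq> 0"
    using exh[of i] exh[of j] exh[of l] dd
    apply (elim disjE)
    apply (simp_all add: nf_comp det3_def assms s)
    done
qed

lemma nf_unique:
  assumes "rel' (nf s t) (nf s' t' :: 'k::field^3^5)" shows "s' = s \<and> t' = t"
proof -
  obtain A cc where h: "\<forall>i. cc i \<noteq> (0::'k)" "\<forall>i. nf s' t' $ i = cc i *s (A *v (nf s t $ i))"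
    using assms unfolding rel'_def by blast
  have ca: "cc a \<noteq> 0" and cb: "cc b \<noteq> 0" and ccc: "cc c \<noteq> 0" and cd: "cc d \<noteq> 0" and ce: "cc e \<noteq> 0"
    using h(1) by auto
  have Ea: "1 = cc a * A$1$1" "0 = cc a * A$2$1" "0 = cc a * A$3$1"
    using h(2)[rule_format, of a] by (simp_all add: nf_comp vec3_eq mv3)
  have Eb: "0 = cc b * A$1$2" "1 = cc b * A$2$2" "0 = cc b * A$3$2"
    using h(2)[rule_format, of b] by (simp_all add: nf_comp vec3_eq mv3)
  have Ec: "0 = cc c * A$1$3" "0 = cc c * A$2$3" "1 = cc c * A$3$3"
    using h(2)[rule_format, of c] by (simp_all add: nf_comp vec3_eq mv3)
  have z: "A$2$1 = 0" "A$3$1 = 0" "A$1$2 = 0" "A$3$2 = 0" "A$1$3 = 0" "A$2$3 = 0"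
    using Ea Eb Ec ca cb ccc by auto
  have Ed: "1 = cc d * A$1$1" "1 = cc d * A$2$2" "1 = cc d * A$3$3"
    using h(2)[rule_format, of d] z by (simp_all add: nf_comp vec3_eq mv3)
  have Ee: "1 = cc e * A$1$1" "s' = cc e * (A$2$2 * s)" "t' = cc e * (A$3$3 * t)"
    using h(2)[rule_format, of e] z by (simp_all add: nf_comp vec3_eq mv3)
  have "A$2$2 = A$1$1" "A$3$3 = A$1$1" using Ed cd by (metis mult_left_cancel)+
  then show ?thesis using Ee by (simp add: mult.assoc[symmetric])
qed

lemma fv_consts:
  assumes h: "frobq q TYPE('k::field)"
  shows "fv q (vector [x, y, z] :: 'k^3) = vector [x^q, y^q, z^q]"
  by (simp add: vec3_eq)

lemma zero_pow_q: "frobq q TYPE('k::field) \<Longrightarrow> (0::'k)^q = 0"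
  using frob_zero_iff by blast

lemma fixed_nf:
  assumes h: "frobq q TYPE('k::field)"
  and r: "rel' (nf s t) (frob_perm q \<sigma> (nf s t :: 'k^3^5))"
  shows "t = 1 - s^q \<and> s^(q^2+1) + s^q - 1 = 0"
proof -
  obtain A cc where hh: "\<forall>i. cc i \<noteq> (0::'k)"
      "\<forall>i. frob_perm q \<sigma> (nf s t) $ i = cc i *s (A *v (nf s t $ i))"
    using r unfolding rel'_def by blast
  have ca: "cc a \<noteq> 0" and cb: "cc b \<noteq> 0" and ccc: "cc c \<noteq> 0" and cd: "cc d \<noteq> 0" and ce: "cc e \<noteq> 0"
    using hh(1) by auto
  have z0: "(0::'k)^q = 0" using zero_pow_q[OF h] .
  note S = frob_perm_comp sig nf_comp fv_consts[OF h] z0 vec3_eq mv3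
  have Ea: "0 = cc a * A$1$1" "1 = cc a * A$2$1" "0 = cc a * A$3$1"
    using hh(2)[rule_format, of a] by (simp_all add: S)
  have Eb: "0 = cc b * A$1$2" "0 = cc b * A$2$2" "1 = cc b * A$3$2"
    using hh(2)[rule_format, of b] by (simp_all add: S)
  have Ec: "1 = cc c * A$1$3" "1 = cc c * A$2$3" "1 = cc c * A$3$3"
    using hh(2)[rule_format, of c] by (simp_all add: S)
  have z: "A$1$1 = 0" "A$3$1 = 0" "A$1$2 = 0" "A$2$2 = 0"
    using Ea Eb ca cb by auto
  have g: "A$2$3 = A$1$3" "A$3$3 = A$1$3" using Ec ccc by (metis mult_left_cancel)+
  have Ed: "1 = cc d * A$1$3" "s^q = cc d * (A$2$1 + A$1$3)" "t^q = cc d * (A$3$2 + A$1$3)"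
    using hh(2)[rule_format, of d] z g by (simp_all add: S)
  have Ee: "0 = A$2$1 + A$1$3 * t" "0 = A$3$2 * s + A$1$3 * t"
    using hh(2)[rule_format, of e] z g ce by (simp_all add: S)
  have t1: "t = 1 - s^q"
  proof -
    have "s^q = cc d * A$2$1 + cc d * A$1$3" using Ed(2) by (simp add: algebra_simps)
    also have "A$2$1 = - (A$1$3 * t)" using Ee(1)[symmetric] by (simp add: eq_neg_iff_add_eq_0)
    then have "cc d * A$2$1 = - (cc d * A$1$3) * t" by simp
    finally show ?thesis using Ed(1) by simp
  qed
  have t2: "s * t^q = s - t"
  proof -
    have "s * t^q = cc d * A$3$2 * s + cc d * A$1$3 * s" using Ed(3) by (simp add: algebra_simps)
    also have "A$3$2 * s = - (A$1$3 * t)" using Ee(2)[symmetric] by (simp add: eq_neg_iff_add_eq_0)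
    then have "cc d * A$3$2 * s = - (cc d * A$1$3) * t" by (simp add: mult.assoc)
    finally show ?thesis using Ed(1) by simp
  qed
  have tq': "t^q = 1 - s^(q^2)" unfolding t1 frob_diff[OF h]
    by (simp add: power_mult[symmetric] power2_eq_square)
  from t2 have "s * (1 - s^(q^2)) = s - t" by (simp only: tq')
  then have "s * (1 - s^(q^2)) = s - (1 - s^q)" by (simp only: t1)
  then have "s^(q^2+1) + s^q - 1 = 0" by (simp add: algebra_simps)
  then show ?thesis using t1 by simp
qed

lemma root_fixed:
  assumes h: "frobq q TYPE('k::field)" and y: "y^(q^2+1) + y^q - 1 = (0::'k)"
    and y0: "y \<noteq> 0" and t0: "1 - y^q \<noteq> 0"
  shows "rel' (nf y (1 - y^q)) (frob_perm q \<sigma> (nf y (1 - y^q)))"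
proof -
  define t where "t = 1 - y^q"
  have t0': "t \<noteq> 0" using t0 t_def by simp
  have tdef': "t + y^q = 1" using t_def by simp
  have z0: "(0::'k)^q = 0" using zero_pow_q[OF h] .
  have tq: "t^q = 1 - t / y"
  proof -
    have "t^q = 1 - y^(q^2)" unfolding t_def frob_diff[OF h]
      by (simp add: power_mult[symmetric] power2_eq_square)
    moreover have "y * y^(q^2) = t" using y unfolding t_def by (simp add: algebra_simps)
    then have "y^(q^2) = t / y" using y0 by (simp add: eq_divide_eq mult.commute)
    ultimately show ?thesis by simp
  qed
  define A :: "'k^3^3" where "A = vector [vector [0,0,1], vector [-t,0,1], vector [0, -t/y, 1]]"
  define cc :: "5 \<Rightarrow> 'k" where "cc i = (if i = a then -1/t else if i = b then -y/t else if i = c then 1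
       else if i = d then 1 else 1/t)" for i
  have "det A = t*t/y" unfolding A_def by (simp add: det_3 field_simps)
  then have iA: "invertible A" using t0' y0 invertible_det_nz by force
  have cnz: "\<forall>i. cc i \<noteq> 0" unfolding cc_def using t0' y0 by auto
  have "frob_perm q \<sigma> (nf y t) $ i = cc i *s (A *v (nf y t $ i))" for i
    using exh[of i]
    apply (elim disjE)
    apply (simp_all add: frob_perm_comp sig nf_comp fv_consts[OF h] z0 vec3_eq mv3 A_def cc_def D)
    using t0' y0 tq tdef' by (simp_all add: field_simps)
  then show ?thesis unfolding rel'_def t_def[symmetric] using iA cnz by blast
qed

definition cr :: "'k::comm_ring_1^3 \<Rightarrow> 'k^3 \<Rightarrow> 'k^3" where
  "cr x y = vector [x$2 * y$3 - x$3 * y$2, x$3 * y$1 - x$1 * y$3, x$1 * y$2 - x$2 * y$1]"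

lemma det3_rep: "det3 x x z = 0" "det3 x y x = 0" "det3 x y y = 0"
  by (simp_all add: det3_def algebra_simps)

lemma det3_cr: "det3 (cr y z) (cr z x) (cr x y) = (det3 x y z)^2"
  by (simp add: det3_def cr_def power2_eq_square algebra_simps)

lemma det_rows_smult:
  "det (vector [p *s x, r *s y, w *s z] :: 'k::comm_ring_1^3^3) = p * r * w * det3 x y z"
  by (simp add: det_3 det3_def algebra_simps)

lemma normalize:
  assumes g: "gen_pos (v::'k::field^3^5)"
  shows "\<exists>s t. rel' v (nf s t)"
proof -
  have G: "\<And>i j l. i \<noteq> j \<Longrightarrow> j \<noteq> l \<Longrightarrow> i \<noteq> l \<Longrightarrow> det3 (v$i) (v$j) (v$l) \<noteq> 0"
    using g unfolding gen_pos_iff by blast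
  define u0 u1 u2 u3 u4 where "u0 = v$a" "u1 = v$b" "u2 = v$c" "u3 = v$d" "u4 = v$e"
  define D where "D = det3 u0 u1 u2"
  define l1 l2 l3 where "l1 = det3 u3 u1 u2" "l2 = det3 u0 u3 u2" "l3 = det3 u0 u1 u3"
  define m1 m2 m3 where "m1 = det3 u4 u1 u2" "m2 = det3 u0 u4 u2" "m3 = det3 u0 u1 u4"
  have nz: "D \<noteq> 0" "l1 \<noteq> 0" "l2 \<noteq> 0" "l3 \<noteq> 0" "m1 \<noteq> 0"
    unfolding D_def l1_l2_l3_def m1_m2_m3_def u0_u1_u2_u3_u4_def using G D by auto
  define A :: "'k^3^3" where
    "A = vector [(1/l1) *s cr u1 u2, (1/l2) *s cr u2 u0, (1/l3) *s cr u0 u1]"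
  have Ax: "A *v x = vector [det3 x u1 u2 / l1, det3 u0 x u2 / l2, det3 u0 u1 x / l3]" for x
    unfolding A_def by (simp add: vec3_eq mv3 cr_def det3_def divide_inverse algebra_simps)
  have "det A = (1/l1) * (1/l2) * (1/l3) * det3 (cr u1 u2) (cr u2 u0) (cr u0 u1)"
    unfolding A_def by (rule det_rows_smult)
  also have "\<dots> = D^2 / (l1 * l2 * l3)" unfolding det3_cr D_def by simp
  finally have "det A \<noteq> 0" using nz by simp
  then have iA: "invertible A" using invertible_det_nz by blast
  define s t where "s = (l1/m1) * (m2/l2)" "t = (l1/m1) * (m3/l3)"
  define cc :: "5 \<Rightarrow> 'k" where "cc i = (if i = a then l1/D else if i = b then l2/D else if i = c then l3/D
       else if i = d then 1 else l1/m1)" for i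
  have cnz: "\<forall>i. cc i \<noteq> 0" unfolding cc_def using nz by auto
  have "nf s t $ i = cc i *s (A *v (v $ i))" for i
    using exh[of i]
    apply (elim disjE)
    apply (simp_all add: Ax nf_comp vec3_eq cc_def D u0_u1_u2_u3_u4_def[symmetric] det3_rep)
    using nz by (simp_all add: D_def l1_l2_l3_def m1_m2_m3_def s_t_def field_simps)
  then have "rel' v (nf s t)" unfolding rel'_def using iA cnz by blast
  then show ?thesis by blast
qed

lemma root_props:
  assumes h: "frobq q TYPE('k::field)" and y: "y^(q^2+1) + y^q - 1 = (0::'k)"
  shows "y \<noteq> 0" "y \<noteq> 1" "1 - y^q \<noteq> 0" "1 - y^q \<noteq> 1" "y \<noteq> 1 - y^q"
proof -
  have z0: "(0::'k)^q = 0" using zero_pow_q[OF h] .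
  have yy: "y^(q^2+1) = y * (y^q)^q" by (simp add: power_mult[symmetric] power2_eq_square)
  have zp: "(0::'k)^(q^2+1) = 0" by simp
  show y0: "y \<noteq> 0"
  proof
    assume y0: "y = 0"
    have "(0::'k) = 0^(q^2+1) + 0^q - 1" using y unfolding y0 by (rule sym)
    then have "(0::'k) = 0 + 0 - 1" by (simp only: zp z0)
    then show False by simp
  qed
  show "y \<noteq> 1"
  proof
    assume y1: "y = 1"
    have "(0::'k) = 1^(q^2+1) + 1^q - 1" using y unfolding y1 by (rule sym)
    then show False by simp
  qed
  show "1 - y^q \<noteq> 0"
  proof
    assume "1 - y^q = 0"
    then have "y^q = 1" by simp
    then show False using y y0 yy by simp
  qed
  show "1 - y^q \<noteq> 1" using y0 frob_zero_iff[OF h] by auto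
  show "y \<noteq> 1 - y^q"
  proof
    assume e: "y = 1 - y^q"
    have "y^q = 1 - (1 - y^q)" by simp
    then have e2: "y^q = 1 - y" by (simp only: e[symmetric])
    then have "(y^q)^q = 1 - y^q" by (simp add: frob_diff[OF h])
    then have "(y^q)^q = y" using e by simp
    then have y2: "y^(q^2+1) = y * y" using yy by simp
    from y have "y * y + (1 - y) - 1 = 0" by (simp only: y2 e2)
    then have "y * (y - 1) = 0" by (simp add: algebra_simps)
    then show False using y0 \<open>y \<noteq> 1\<close> by simp
  qed
qed

lemma card_fixed:
  assumes h: "frobq q TYPE('k::field)"
    and ac: "\<forall>g :: 'k poly. degree g > 0 \<longrightarrow> (\<exists>x. poly g x = 0)"
  shows "card (P5_fixed q \<sigma> :: ('k^3^5) set set) = q^2+1"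
proof -
  define R where "R = {y::'k. y^(q^2+1) + y^q - 1 = 0}"
  define N where "N y = (nf y (1 - y^q) :: 'k^3^5)" for y
  define \<phi> where "\<phi> y = (pgl_rel :: (('k^3^5) \<times> _) set) `` {N y}" for y
  have E: "equiv configs (pgl_rel :: (('k^3^5) \<times> _) set)" by (rule equiv_pgl)
  have T: "trans (pgl_rel :: (('k^3^5) \<times> _) set)" using E unfolding equiv_def by blast
  have NG: "gen_pos (N y)" if "y \<in> R" for y
    unfolding N_def using root_props[OF h, of y] that R_def by (intro nf_gen_pos) auto
  have NC: "N y \<in> configs" if "y \<in> R" for y using NG[OF that] configs_def by auto
  have inj: "inj_on \<phi> R"
  proof (rule inj_onI)
    fix y y' assume yR: "y \<in> R" "y' \<in> R" and eq: "\<phi> y = \<phi> y'"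
    have "(N y, N y') \<in> pgl_rel" using eq E NC[OF yR(2)] unfolding \<phi>_def
      by (rule eq_equiv_class)
    then have "rel' (N y) (N y')" unfolding pgl_rel_iff by blast
    then show "y = y'" unfolding N_def using nf_unique by blast
  qed
  have sub1: "\<phi> ` R \<subseteq> P5_fixed q \<sigma>"
  proof
    fix X assume "X \<in> \<phi> ` R"
    then obtain y where yR: "y \<in> R" and X: "X = \<phi> y" by auto
    have XP: "X \<in> P5" unfolding X \<phi>_def P5_def using NC[OF yR] by (rule quotientI)
    have yr: "y^(q^2+1)+y^q-1 = 0" using yR R_def by simp
    have "rel' (N y) (frob_perm q \<sigma> (N y))"
      unfolding N_def by (rule root_fixed[OF h yr root_props(1)[OF h yr] root_props(3)[OF h yr]])
    then have NF: "(N y, frob_perm q \<sigma> (N y)) \<in> pgl_rel"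
      unfolding pgl_rel_iff using NG[OF yR] by blast
    have "\<forall>w\<in>X. frob_perm q \<sigma> w \<in> X"
    proof
      fix w assume "w \<in> X"
      then have "(N y, w) \<in> pgl_rel" unfolding X \<phi>_def by simp
      then have "(frob_perm q \<sigma> (N y), frob_perm q \<sigma> w) \<in> pgl_rel"
        by (rule transport[OF h inj_sig])
      then have "(N y, frob_perm q \<sigma> w) \<in> pgl_rel"
        by (rule transD[OF T NF])
      then show "frob_perm q \<sigma> w \<in> X" unfolding X \<phi>_def by simp
    qed
    then show "X \<in> P5_fixed q \<sigma>" unfolding P5_fixed_def using XP by simp
  qed
  have sub2: "P5_fixed q \<sigma> \<subseteq> \<phi> ` R"
  proof
    fix X assume XF: "X \<in> (P5_fixed q \<sigma> :: ('k^3^5) set set)"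
    then have "X \<in> configs // pgl_rel" unfolding P5_fixed_def P5_def by simp
    then obtain v where X: "X = pgl_rel `` {v}" and vc: "v \<in> configs" by (rule quotientE)
    have gv: "gen_pos v" using vc configs_def by auto
    obtain s t where r: "rel' v (nf s t)" using normalize[OF gv] by blast
    then have vn: "(v, nf s t) \<in> pgl_rel" unfolding pgl_rel_iff using gv by blast
    then have nc: "nf s t \<in> configs" using E unfolding equiv_def refl_on_def pgl_rel_def by auto
    have X2: "X = pgl_rel `` {nf s t}" unfolding X using E vn by (rule equiv_class_eq)
    have "nf s t \<in> X" unfolding X2 using E nc by (rule equiv_class_self)
    then have "frob_perm q \<sigma> (nf s t) \<in> X" using XF unfolding P5_fixed_def by blast
    then have "(nf s t, frob_perm q \<sigma> (nf s t)) \<in> pgl_rel" unfolding X2 by simp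
    then have "rel' (nf s t) (frob_perm q \<sigma> (nf s t))" unfolding pgl_rel_iff by blast
    from fixed_nf[OF h this] have st: "t = 1 - s^q" "s^(q^2+1) + s^q - 1 = 0" by auto
    have "X = \<phi> s" unfolding X2 \<phi>_def N_def st(1) ..
    moreover have "s \<in> R" using st R_def by simp
    ultimately show "X \<in> \<phi> ` R" by blast
  qed
  have "bij_betw \<phi> R (P5_fixed q \<sigma>)" unfolding bij_betw_def using inj sub1 sub2 by blast
  then have "card (P5_fixed q \<sigma> :: ('k^3^5) set set) = card R" by (simp add: bij_betw_same_card)
  also have "\<dots> = q^2+1" unfolding R_def by (rule card_fpoly_roots[OF h ac])
  finally show ?thesis .
qed

end

theorem mainTheorem6:
  fixes p n q :: nat and \<sigma> :: "5 \<Rightarrow> 5" and cs :: "5 list"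
  assumes "prime p" and "n \<ge> 1" and "q = p ^ n"
    and "CHAR('k::field) = p"
    and "\<forall>f :: 'k poly. degree f > 0 \<longrightarrow> (\<exists>x. poly f x = 0)"
    and "\<forall>x :: 'k. \<exists>m>0. x ^ (p ^ m) = x"
    and "distinct cs" and "length cs = 5" and "\<sigma> = cycle_of_list cs"
  shows "card (P5_fixed q \<sigma> :: ('k^3^5) set set) = q ^ 2 + 1"
proof -
  have h: "frobq q TYPE('k)" unfolding frobq_def using assms(1-4) by auto
  define a b c d e where "a = cs!0" "b = cs!1" "c = cs!2" "d = cs!3" "e = cs!4"
  have cs: "cs = [a,b,c,d,e]"
  proof (rule nth_equalityI)
    show "length cs = length [a,b,c,d,e]" using assms(8) by simp
  next
    fix i assume "i < length cs"
    then have "i < 5" using assms(8) by simp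
    then have "i = 0 \<or> i = 1 \<or> i = 2 \<or> i = 3 \<or> i = 4" by linarith
    then show "cs ! i = [a,b,c,d,e] ! i" unfolding a_b_c_d_e_def by auto
  qed
  have ds: "distinct [a,b,c,d,e]" using assms(7) cs by simp
  have setcs: "set cs = UNIV"
  proof (rule card_seteq)
    show "finite (UNIV :: 5 set)" by simp
    show "set cs \<subseteq> UNIV" by simp
    show "card (UNIV :: 5 set) \<le> card (set cs)" using distinct_card[OF assms(7)] assms(8) by simp
  qed
  have cy: "cyc a b c d e \<sigma>"
  proof
    show "a \<noteq> b" "a \<noteq> c" "a \<noteq> d" "a \<noteq> e" "b \<noteq> c" "b \<noteq> d" "b \<noteq> e"
      "c \<noteq> d" "c \<noteq> e" "d \<noteq> e" using ds by auto
    show "\<sigma> a = b" "\<sigma> b = c" "\<sigma> c = d" "\<sigma> d = e" "\<sigma> e = a"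
      using ds unfolding assms(9) cs by auto
    fix i :: 5
    have "i \<in> set cs" using setcs by simp
    then show "i = a \<or> i = b \<or> i = c \<or> i = d \<or> i = e" unfolding cs by auto
  qed
  show ?thesis using cyc.card_fixed[OF cy h assms(5)] .
qed

end
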